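(* Let $\frac12<H_1<H_2<1$. There is a constant $C=C_{H_1,H_2}>0$ depending only on $H_1,H_2$ such that for all $0<s<u$, $$0\le k(s,u)=k(u,s)\le C\,s^{1-2H_1}(u-s)^{2H_2-2H_1-1}.$$ Moreover $0\le\partial_tK_{H_1,H_2}(t,s)\le C\,s^{1/2-H_2}t^{H_2-H_1}(t-s)^{H_2-H_1-1}$ for all $0<s<t$.
   Context: For $0<s<t$ let $K_{H_1,H_2}(t,s)=\beta_{H_2}s^{1/2-H_2}\int_s^t (t-u)^{1/2-H_1}u^{H_2-H_1}(u-s)^{H_2-3/2}du$, and $K_{H_1,H_2}(t,s)=0$ for $s\ge t$, where $\beta_H=\big(H(2H-1)/\mathrm B(H-\frac12,2-2H)\big)^{1/2}$ and $\mathrm B$ is the Beta function. $\partial_tK_{H_1,H_2}(t,s)$ is the derivative in the first variable. $k(s,u)=\int_0^{s\wedge u}\partial_sK_{H_1,H_2}(s,v)\partial_uK_{H_1,H_2}(u,v)dv$ for $s,u>0$. *)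

theory Defs
  imports "HOL-Analysis.Analysis"
begin

definition betaH :: "real \<Rightarrow> real" where
  "betaH H = sqrt (H * (2*H - 1) / Beta (H - 1/2) (2 - 2*H))"

definition KH :: "real \<Rightarrow> real \<Rightarrow> real \<Rightarrow> real \<Rightarrow> real" where
  "KH H1 H2 t s =
     (if 0 < s \<and> s < t then
        betaH H2 * s powr (1/2 - H2) *
        (LBINT u=s..t. (t - u) powr (1/2 - H1) * u powr (H2 - H1) * (u - s) powr (H2 - 3/2))
      else 0)"

definition dKH :: "real \<Rightarrow> real \<Rightarrow> real \<Rightarrow> real \<Rightarrow> real" where
  "dKH H1 H2 t s = deriv (\<lambda>t'. KH H1 H2 t' s) t"

definition kH :: "real \<Rightarrow> real \<Rightarrow> real \<Rightarrow> real \<Rightarrow> real" where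
  "kH H1 H2 s u = (LBINT v=0..min s u. dKH H1 H2 s v * dKH H1 H2 u v)"

end

theory Submission
  imports Defs
begin


definition Gf :: "real \<Rightarrow> real \<Rightarrow> real \<Rightarrow> real \<Rightarrow> real" where
  "Gf H1 H2 s t = (\<integral>x. indicator {0<..<1} x * (x powr (H2-3/2) * (1-x) powr (1/2-H1) * (s+(t-s)*x) powr (H2-H1)) \<partial>lborel)"

lemma LBINT_affine:
  fixes f :: "real \<Rightarrow> real"
  assumes "s < t"
  shows "(LBINT u=s..t. f u) = (t-s) * (\<integral>x. indicator {0<..<1} x * f (s + (t-s)*x) \<partial>lborel)"
proof -
  have "(LBINT u=s..t. f u) = (\<integral>u. indicator {s<..<t} u * f u \<partial>lborel)"
    using assms by (simp add: interval_lebesgue_integral_def set_lebesgue_integral_def einterval_eq_Icc)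
  also have "\<dots> = \<bar>t-s\<bar> *\<^sub>R (\<integral>x. indicator {s<..<t} (s+(t-s)*x) * f (s+(t-s)*x) \<partial>lborel)"
    using assms by (intro lborel_integral_real_affine) auto
  also have "(\<lambda>x. indicator {s<..<t} (s+(t-s)*x) * f (s+(t-s)*x)) = (\<lambda>x. indicator {0<..<1} x * f (s + (t-s)*x))"
  proof
    fix x
    have a1: "s < s+(t-s)*x \<longleftrightarrow> 0 < x" using assms by (simp add: zero_less_mult_iff)
    have a2: "s+(t-s)*x < t \<longleftrightarrow> (t-s)*x < (t-s)" by linarith
    have a3: "(t-s)*x < (t-s) \<longleftrightarrow> x < 1" using assms by (simp add: mult_less_cancel_left1)
    have "s+(t-s)*x \<in> {s<..<t} \<longleftrightarrow> x \<in> {0<..<1}"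
      using a1 a2 a3 by auto
    then show "indicator {s<..<t} (s+(t-s)*x) * f (s+(t-s)*x) = indicator {0<..<1} x * f (s + (t-s)*x)"
      by (simp add: indicator_def)
  qed
  finally show ?thesis using assms by simp
qed

lemma K_formula:
  assumes "0 < s" "s < t"
  shows "KH H1 H2 t s = betaH H2 * s powr (1/2-H2) * ((t-s) powr (H2-H1) * Gf H1 H2 s t)"
proof -
  have "(LBINT u=s..t. (t - u) powr (1/2 - H1) * u powr (H2 - H1) * (u - s) powr (H2 - 3/2))
     = (t-s) * (\<integral>x. indicator {0<..<1} x * ((t - (s+(t-s)*x)) powr (1/2 - H1) * (s+(t-s)*x) powr (H2 - H1) * ((s+(t-s)*x) - s) powr (H2 - 3/2)) \<partial>lborel)"
    by (rule LBINT_affine) fact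
  also have "(\<lambda>x. indicator {0<..<1} x * ((t - (s+(t-s)*x)) powr (1/2 - H1) * (s+(t-s)*x) powr (H2 - H1) * ((s+(t-s)*x) - s) powr (H2 - 3/2)))
     = (\<lambda>x. (t-s) powr (H2-H1-1) * (indicator {0<..<1} x * (x powr (H2-3/2) * (1-x) powr (1/2-H1) * (s+(t-s)*x) powr (H2-H1))))"
  proof
    fix x :: real
    show "indicator {0<..<1} x * ((t - (s+(t-s)*x)) powr (1/2 - H1) * (s+(t-s)*x) powr (H2 - H1) * ((s+(t-s)*x) - s) powr (H2 - 3/2))
     = (t-s) powr (H2-H1-1) * (indicator {0<..<1} x * (x powr (H2-3/2) * (1-x) powr (1/2-H1) * (s+(t-s)*x) powr (H2-H1)))"
    proof (cases "x \<in> {0<..<1}")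
      case True
      have e1: "t - (s+(t-s)*x) = (t-s)*(1-x)" by algebra
      have e2: "(s+(t-s)*x) - s = (t-s)*x" by simp
      have "(t-s) powr (1/2-H1) * (t-s) powr (H2-3/2) = (t-s) powr (H2-H1-1)"
        by (simp add: powr_add[symmetric])
      then show ?thesis using True assms unfolding e1 e2
        by (simp add: powr_mult indicator_def)
    qed simp
  qed
  also have "(t-s) * (\<integral>x. (t-s) powr (H2-H1-1) * (indicator {0<..<1} x * (x powr (H2-3/2) * (1-x) powr (1/2-H1) * (s+(t-s)*x) powr (H2-H1))) \<partial>lborel)
     = ((t-s) * (t-s) powr (H2-H1-1)) * Gf H1 H2 s t"
    unfolding Gf_def by (subst integral_mult_right_zero) simp
  also have "(t-s) * (t-s) powr (H2-H1-1) = (t-s) powr (H2-H1)"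
    using assms by (simp add: powr_mult_base)
  finally have "(LBINT u=s..t. (t - u) powr (1/2 - H1) * u powr (H2 - H1) * (u - s) powr (H2 - 3/2)) = (t-s) powr (H2-H1) * Gf H1 H2 s t" .
  then show ?thesis unfolding KH_def by (subst if_P) (use assms in auto)
qed



lemma deriv_integral:
  fixes f f' :: "real \<Rightarrow> real \<Rightarrow> real" and g :: "real \<Rightarrow> real"
  assumes e: "0 < e"
    and der: "\<And>t x. t \<in> ball t0 e \<Longrightarrow> ((\<lambda>t. f t x) has_real_derivative f' t x) (at t)"
    and bnd: "\<And>t x. t \<in> ball t0 e \<Longrightarrow> \<bar>f' t x\<bar> \<le> g x"
    and g: "integrable lborel g"
    and fi: "\<And>t. t \<in> ball t0 e \<Longrightarrow> integrable lborel (f t)"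
    and fm: "f' t0 \<in> borel_measurable lborel"
  shows "((\<lambda>t. \<integral>x. f t x \<partial>lborel) has_real_derivative (\<integral>x. f' t0 x \<partial>lborel)) (at t0)"
proof -
  let ?F = "\<lambda>t. \<integral>x. f t x \<partial>lborel"
  have mvt: "\<bar>f y x - f t0 x\<bar> \<le> g x * \<bar>y - t0\<bar>" if y: "y \<in> ball t0 e" for y x
  proof -
    have "norm (f y x - f t0 x) \<le> g x * norm (y - t0)"
    proof (rule field_differentiable_bound[where S="ball t0 e" and f="\<lambda>t. f t x" and f'="\<lambda>t. f' t x"])
      show "\<And>z. z \<in> ball t0 e \<Longrightarrow> ((\<lambda>t. f t x) has_field_derivative f' z x) (at z within ball t0 e)"
        using der by (rule has_field_derivative_at_within)
      show "\<And>z. z \<in> ball t0 e \<Longrightarrow> norm (f' z x) \<le> g x" using bnd by simp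
    qed (use y e in auto)
    then show ?thesis by simp
  qed
  have "((\<lambda>y. (?F y - ?F t0) / (y - t0)) \<longlongrightarrow> (\<integral>x. f' t0 x \<partial>lborel)) (at t0)"
    unfolding tendsto_at_iff_sequentially
  proof (intro allI impI)
    fix X :: "nat \<Rightarrow> real" assume X: "\<forall>i. X i \<in> UNIV - {t0}" and lim: "X \<longlonglongrightarrow> t0"
    have "eventually (\<lambda>n. dist (X n) t0 < e) sequentially" using lim e by (rule tendstoD)
    then obtain N where N: "\<And>n. n \<ge> N \<Longrightarrow> dist (X n) t0 < e"
      by (auto simp: eventually_sequentially)
    have XN: "X (n+N) \<in> ball t0 e" for n using N[of "n+N"] by (simp add: dist_commute)
    have t0b: "t0 \<in> ball t0 e" using e by simp
    define Q where "Q n x = (f (X (n+N)) x - f t0 x) / (X (n+N) - t0)" for n x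
    have eq: "(?F (X (n+N)) - ?F t0) / (X (n+N) - t0) = (\<integral>x. Q n x \<partial>lborel)" for n
      unfolding Q_def using fi[OF XN[of n]] fi[OF t0b]
      by (simp add: integral_diff)
    have "(\<lambda>n. \<integral>x. Q n x \<partial>lborel) \<longlonglongrightarrow> (\<integral>x. f' t0 x \<partial>lborel)"
    proof (rule integral_dominated_convergence[where w=g])
      show "f' t0 \<in> borel_measurable lborel" by fact
      show "Q n \<in> borel_measurable lborel" for n
        unfolding Q_def using fi[OF XN[of n], THEN borel_measurable_integrable] fi[OF t0b, THEN borel_measurable_integrable]
        by measurable
      show "integrable lborel g" by fact
      show "AE x in lborel. (\<lambda>n. Q n x) \<longlonglongrightarrow> f' t0 x"
      proof (rule AE_I2)
        fix x
        have d: "((\<lambda>y. (f y x - f t0 x) / (y - t0)) \<longlongrightarrow> f' t0 x) (at t0)"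
          using der[OF t0b] by (simp add: has_field_derivative_iff)
        have fl: "filterlim (\<lambda>n. X (n+N)) (at t0) sequentially"
          unfolding filterlim_at using X by (auto intro!: LIMSEQ_ignore_initial_segment lim)
        show "(\<lambda>n. Q n x) \<longlonglongrightarrow> f' t0 x"
          unfolding Q_def using filterlim_compose[OF d fl] by simp
      qed
      show "AE x in lborel. norm (Q n x) \<le> g x" for n
      proof (rule AE_I2)
        fix x
        have ne: "X (n+N) - t0 \<noteq> 0" using X by auto
        have "\<bar>f (X (n+N)) x - f t0 x\<bar> \<le> g x * \<bar>X (n+N) - t0\<bar>" by (rule mvt[OF XN])
        then show "norm (Q n x) \<le> g x" unfolding Q_def using ne
          by (simp add: abs_divide divide_le_eq)
      qed
    qed
    then have *: "(\<lambda>n. (?F (X (n+N)) - ?F t0) / (X (n+N) - t0)) \<longlonglongrightarrow> (\<integral>x. f' t0 x \<partial>lborel)"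
      by (simp only: eq)
    define h where "h = (\<lambda>y. (?F y - ?F t0) / (y - t0)) \<circ> X"
    have "(\<lambda>n. h (n+N)) \<longlonglongrightarrow> (\<integral>x. f' t0 x \<partial>lborel)"
      using * by (simp only: h_def comp_def)
    then have "h \<longlonglongrightarrow> (\<integral>x. f' t0 x \<partial>lborel)" by (rule LIMSEQ_offset)
    then show "((\<lambda>y. (?F y - ?F t0) / (y - t0)) \<circ> X) \<longlonglongrightarrow> (\<integral>x. f' t0 x \<partial>lborel)"
      by (simp only: h_def)
  qed
  then show ?thesis by (simp add: has_field_derivative_iff)
qed



definition ww :: "real \<Rightarrow> real \<Rightarrow> real \<Rightarrow> real" where
  "ww H1 H2 x = x powr (H2-3/2) * (1-x) powr (1/2-H1)"

definition Wc :: "real \<Rightarrow> real \<Rightarrow> real" where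
  "Wc H1 H2 = (\<integral>x. indicator {0<..<1} x * ww H1 H2 x \<partial>lborel)"

definition Gd :: "real \<Rightarrow> real \<Rightarrow> real \<Rightarrow> real \<Rightarrow> real" where
  "Gd H1 H2 s t = (\<integral>x. indicator {0<..<1} x * (ww H1 H2 x * ((H2-H1) * (s+(t-s)*x) powr (H2-H1-1) * x)) \<partial>lborel)"

lemma ww_nonneg: "0 \<le> ww H1 H2 (x::real)" by (simp add: ww_def)

lemma w_int:
  fixes H1 H2 :: real
  assumes "1/2 < H1" "H1 < H2" "H2 < 1"
  shows "integrable lborel (\<lambda>x. indicator {0<..<1} x * ww H1 H2 x)"
proof -
  have "set_integrable lborel {0..1} (\<lambda>t. t powr (H2-1/2 - 1) * (1 - t) powr (3/2-H1 - 1))"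
    using assms by (intro integrable_Beta) auto
  then have "set_integrable lborel {0<..<1} (\<lambda>t. t powr (H2-1/2 - 1) * (1 - t) powr (3/2-H1 - 1))"
    by (rule set_integrable_subset) auto
  moreover have "H2-1/2-1 = H2-3/2" "3/2-H1-1 = 1/2-H1" by simp_all
  ultimately show ?thesis by (simp add: set_integrable_def ww_def)
qed

lemma G_deriv:
  fixes H1 H2 s t0 :: real
  assumes H: "1/2 < H1" "H1 < H2" "H2 < 1" and s: "0 < s" "s < t0"
  shows "(Gf H1 H2 s has_real_derivative Gd H1 H2 s t0) (at t0)"
proof -
  define a where "a = H2 - H1"
  have a: "0 < a" "a < 1" using H by (auto simp: a_def)
  define e where "e = (t0 - s)/2"
  have e: "0 < e" using s by (simp add: e_def)
  have tb: "s < t" if "t \<in> ball t0 e" for t proof -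
    have "\<bar>t0 - t\<bar> < (t0-s)/2" using that by (simp add: e_def dist_real_def)
    moreover have "t0 - t \<le> \<bar>t0 - t\<bar>" by (rule abs_ge_self)
    ultimately have "t0 - t < (t0-s)/2" by linarith
    then show ?thesis using s by (simp add: field_simps)
  qed
  define f where "f t x = indicator {0<..<1} x * (x powr (H2-3/2) * (1-x) powr (1/2-H1) * (s+(t-s)*x) powr (H2-H1))" for t x :: real
  define f' where "f' t x = indicator {0<..<1} x * (ww H1 H2 x * ((H2-H1) * (s+(t-s)*x) powr (H2-H1-1) * x))" for t x :: real
  define g where "g x = indicator {0<..<1} x * ww H1 H2 x * (a * s powr (a-1))" for x :: real
  have pos: "0 < s+(t-s)*x" if "s < t" "x \<in> {0<..<1}" for t x
    using that s by (simp add: add_pos_nonneg)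
  have "((\<lambda>t. \<integral>x. f t x \<partial>lborel) has_real_derivative (\<integral>x. f' t0 x \<partial>lborel)) (at t0)"
  proof (rule deriv_integral[OF e])
    fix t x assume t: "t \<in> ball t0 e"
    show "((\<lambda>t. f t x) has_real_derivative f' t x) (at t)"
    proof (cases "x \<in> {0<..<1}")
      case True
      have p: "0 < s+(t-s)*x" using pos[OF tb[OF t] True] .
      show ?thesis unfolding f_def f'_def ww_def using True p
        by (auto intro!: derivative_eq_intros simp: algebra_simps)
    next
      case False then show ?thesis unfolding f_def f'_def by simp
    qed
    show "\<bar>f' t x\<bar> \<le> g x"
    proof (cases "x \<in> {0<..<1}")
      case True
      have p: "0 < s+(t-s)*x" using pos[OF tb[OF t] True] .
      have le: "s \<le> s+(t-s)*x" using True tb[OF t] by simp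
      have m: "(s+(t-s)*x) powr (a-1) \<le> s powr (a-1)" using powr_mono2'[of "a-1" s "s+(t-s)*x"] le s a by simp
      have "(s+(t-s)*x) powr (a-1) * x \<le> s powr (a-1) * 1"
        using True m by (intro mult_mono) auto
      then have "ww H1 H2 x * (a * (s+(t-s)*x) powr (a-1) * x) \<le> ww H1 H2 x * (a * s powr (a-1))"
        using ww_nonneg[of H1 H2 x] a by (intro mult_left_mono) (auto simp: mult.assoc intro: mult_left_mono)
      moreover have "0 \<le> ww H1 H2 x * (a * (s+(t-s)*x) powr (a-1) * x)"
        using ww_nonneg[of H1 H2 x] a True by simp
      ultimately show ?thesis using True unfolding f'_def g_def a_def by simp
    next
      case False then show ?thesis unfolding f'_def g_def by simp
    qed
  next
    show "integrable lborel g" unfolding g_def using w_int[OF H] by simp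
  next
    fix t assume t: "t \<in> ball t0 e"
    show "integrable lborel (f t)"
    proof (rule Bochner_Integration.integrable_bound[where f="\<lambda>x. indicator {0<..<1} x * ww H1 H2 x * t powr a"])
      show "integrable lborel (\<lambda>x. indicator {0<..<1} x * ww H1 H2 x * t powr a)" using w_int[OF H] by simp
      show "f t \<in> borel_measurable lborel" unfolding f_def by measurable
      show "AE x in lborel. norm (f t x) \<le> norm (indicator {0<..<1} x * ww H1 H2 x * t powr a)"
      proof (rule AE_I2)
        fix x show "norm (f t x) \<le> norm (indicator {0<..<1} x * ww H1 H2 x * t powr a)"
        proof (cases "x \<in> {0<..<1}")
          case True
          have p: "0 < s+(t-s)*x" using pos[OF tb[OF t] True] .
          have "(t-s)*x \<le> (t-s)*1" using True tb[OF t] by (intro mult_left_mono) auto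
          then have le: "s+(t-s)*x \<le> t" by simp
          have "(s+(t-s)*x) powr a \<le> t powr a" using le p a by (intro powr_mono2) auto
          then have "ww H1 H2 x * (s+(t-s)*x) powr a \<le> ww H1 H2 x * t powr a"
            by (intro mult_left_mono ww_nonneg)
          then show ?thesis using True ww_nonneg[of H1 H2 x] unfolding f_def ww_def a_def by simp
        next
          case False then show ?thesis unfolding f_def by simp
        qed
      qed
    qed
  next
    show "f' t0 \<in> borel_measurable lborel" unfolding f'_def ww_def by measurable
  qed
  moreover have "(\<lambda>t. \<integral>x. f t x \<partial>lborel) = Gf H1 H2 s" by (rule ext) (simp add: f_def Gf_def)
  moreover have "(\<integral>x. f' t0 x \<partial>lborel) = Gd H1 H2 s t0" by (simp add: f'_def Gd_def)
  ultimately show ?thesis by simp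
qed



lemma Gf_pt:
  fixes H1 H2 s t x :: real
  assumes H: "1/2 < H1" "H1 < H2" "H2 < 1" and s: "0 < s" "s < t"
  shows "0 \<le> indicator {0<..<1} x * (x powr (H2-3/2) * (1-x) powr (1/2-H1) * (s+(t-s)*x) powr (H2-H1))"
    and "indicator {0<..<1} x * (x powr (H2-3/2) * (1-x) powr (1/2-H1) * (s+(t-s)*x) powr (H2-H1))
         \<le> indicator {0<..<1} x * ww H1 H2 x * t powr (H2-H1)"
proof -
  show "0 \<le> indicator {0<..<1} x * (x powr (H2-3/2) * (1-x) powr (1/2-H1) * (s+(t-s)*x) powr (H2-H1))"
    by simp
  show "indicator {0<..<1} x * (x powr (H2-3/2) * (1-x) powr (1/2-H1) * (s+(t-s)*x) powr (H2-H1))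
         \<le> indicator {0<..<1} x * ww H1 H2 x * t powr (H2-H1)"
  proof (cases "x \<in> {0<..<1}")
    case True
    have p: "0 < s+(t-s)*x" using True s by (simp add: add_pos_nonneg)
    have "(t-s)*x \<le> (t-s)*1" using True s by (intro mult_left_mono) auto
    then have le: "s+(t-s)*x \<le> t" by simp
    have "(s+(t-s)*x) powr (H2-H1) \<le> t powr (H2-H1)" using le p H by (intro powr_mono2) auto
    then have "ww H1 H2 x * (s+(t-s)*x) powr (H2-H1) \<le> ww H1 H2 x * t powr (H2-H1)"
      by (intro mult_left_mono ww_nonneg)
    then show ?thesis using True unfolding ww_def by simp
  qed simp
qed

lemma Gf_int:
  fixes H1 H2 s t x :: real
  assumes H: "1/2 < H1" "H1 < H2" "H2 < 1" and s: "0 < s" "s < t"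
  shows "integrable lborel (\<lambda>x. indicator {0<..<1} x * (x powr (H2-3/2) * (1-x) powr (1/2-H1) * (s+(t-s)*x) powr (H2-H1)))"
proof -
  have i: "integrable lborel (\<lambda>x. indicator {0<..<1} x * ww H1 H2 x * t powr (H2-H1))" using w_int[OF H] by simp
  have m: "(\<lambda>x. indicator {0<..<1} x * (x powr (H2-3/2) * (1-x) powr (1/2-H1) * (s+(t-s)*x) powr (H2-H1))) \<in> borel_measurable lborel"
    by measurable
  have b: "AE x in lborel. norm (indicator {0<..<1} x * (x powr (H2-3/2) * (1-x) powr (1/2-H1) * (s+(t-s)*x) powr (H2-H1)))
     \<le> norm (indicator {0<..<1} x * ww H1 H2 x * t powr (H2-H1))"
    using Gf_pt[OF H s] ww_nonneg by (intro AE_I2) (simp add: abs_of_nonneg)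
  show ?thesis by (rule Bochner_Integration.integrable_bound[OF i m b])
qed

lemma Gf_bounds:
  fixes H1 H2 s t x :: real
  assumes H: "1/2 < H1" "H1 < H2" "H2 < 1" and s: "0 < s" "s < t"
  shows "0 \<le> Gf H1 H2 s t" "Gf H1 H2 s t \<le> t powr (H2-H1) * Wc H1 H2"
proof -
  show "0 \<le> Gf H1 H2 s t" unfolding Gf_def by (intro integral_nonneg_AE AE_I2 Gf_pt(1)[OF H s])
  have "Gf H1 H2 s t \<le> (\<integral>x. indicator {0<..<1} x * ww H1 H2 x * t powr (H2-H1) \<partial>lborel)"
    unfolding Gf_def using w_int[OF H]
    by (intro integral_mono Gf_int[OF H s] Gf_pt(2)[OF H s]) simp
  also have "\<dots> = t powr (H2-H1) * Wc H1 H2" by (simp add: Wc_def mult.commute)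
  finally show "Gf H1 H2 s t \<le> t powr (H2-H1) * Wc H1 H2" .
qed

lemma Gd_pt:
  fixes H1 H2 s t x :: real
  assumes H: "1/2 < H1" "H1 < H2" "H2 < 1" and s: "0 < s" "s < t"
  shows "0 \<le> indicator {0<..<1} x * (ww H1 H2 x * ((H2-H1) * (s+(t-s)*x) powr (H2-H1-1) * x))"
    and "(t-s) powr (H2-H1) * (indicator {0<..<1} x * (ww H1 H2 x * ((H2-H1) * (s+(t-s)*x) powr (H2-H1-1) * x)))
         \<le> indicator {0<..<1} x * ww H1 H2 x * ((H2-H1) * t powr (H2-H1) * (t-s) powr (H2-H1-1))"
    and "indicator {0<..<1} x * (ww H1 H2 x * ((H2-H1) * (s+(t-s)*x) powr (H2-H1-1) * x))
         \<le> indicator {0<..<1} x * ww H1 H2 x * ((H2-H1) * s powr (H2-H1-1))"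
proof -
  define a where "a = H2 - H1"
  have a: "0 < a" "a < 1" using H by (auto simp: a_def)
  show "0 \<le> indicator {0<..<1} x * (ww H1 H2 x * ((H2-H1) * (s+(t-s)*x) powr (H2-H1-1) * x))"
    using H ww_nonneg[of H1 H2 x] by (cases "x \<in> {0<..<1}") auto
  show "(t-s) powr (H2-H1) * (indicator {0<..<1} x * (ww H1 H2 x * ((H2-H1) * (s+(t-s)*x) powr (H2-H1-1) * x)))
         \<le> indicator {0<..<1} x * ww H1 H2 x * ((H2-H1) * t powr (H2-H1) * (t-s) powr (H2-H1-1))"
  proof (cases "x \<in> {0<..<1}")
    case True
    have x: "0 < x" "x < 1" using True by auto
    have ts: "0 < t - s" using s by simp
    have le: "(t-s)*x \<le> s+(t-s)*x" using s by simp
    have m: "(s+(t-s)*x) powr (a-1) \<le> ((t-s)*x) powr (a-1)"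
      using powr_mono2'[of "a-1" "(t-s)*x" "s+(t-s)*x"] le a x ts by simp
    have "((t-s)*x) powr (a-1) * x = (t-s) powr (a-1) * x powr a"
      using x ts by (simp add: powr_mult powr_diff)
    moreover have "x powr a \<le> 1" using x a by (intro powr_le1) auto
    ultimately have m2: "(s+(t-s)*x) powr (a-1) * x \<le> (t-s) powr (a-1)"
      using m x by (smt (verit, ccfv_SIG) mult_left_le mult_right_mono powr_ge_zero)
    have m3: "(t-s) powr a \<le> t powr a" using ts s a by (intro powr_mono2) auto
    have "(t-s) powr a * (a * ((s+(t-s)*x) powr (a-1) * x)) \<le> t powr a * (a * (t-s) powr (a-1))"
      using m2 m3 a x by (intro mult_mono) auto
    then have "ww H1 H2 x * ((t-s) powr a * (a * ((s+(t-s)*x) powr (a-1) * x))) \<le> ww H1 H2 x * (t powr a * (a * (t-s) powr (a-1)))"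
      by (intro mult_left_mono ww_nonneg)
    then show ?thesis using True unfolding a_def by (simp add: ac_simps)
  qed simp
  show "indicator {0<..<1} x * (ww H1 H2 x * ((H2-H1) * (s+(t-s)*x) powr (H2-H1-1) * x))
         \<le> indicator {0<..<1} x * ww H1 H2 x * ((H2-H1) * s powr (H2-H1-1))"
  proof (cases "x \<in> {0<..<1}")
    case True
    have le: "s \<le> s+(t-s)*x" using True s by simp
    have m: "(s+(t-s)*x) powr (a-1) \<le> s powr (a-1)" using powr_mono2'[of "a-1" s "s+(t-s)*x"] le s a by simp
    have "(s+(t-s)*x) powr (a-1) * x \<le> s powr (a-1) * 1"
      using True m by (intro mult_mono) auto
    then have "ww H1 H2 x * (a * ((s+(t-s)*x) powr (a-1) * x)) \<le> ww H1 H2 x * (a * s powr (a-1))"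
      using a by (intro mult_left_mono ww_nonneg) auto
    then show ?thesis using True unfolding a_def by (simp add: ac_simps)
  qed simp
qed

lemma Gd_int:
  fixes H1 H2 s t x :: real
  assumes H: "1/2 < H1" "H1 < H2" "H2 < 1" and s: "0 < s" "s < t"
  shows "integrable lborel (\<lambda>x. indicator {0<..<1} x * (ww H1 H2 x * ((H2-H1) * (s+(t-s)*x) powr (H2-H1-1) * x)))"
proof -
  have i: "integrable lborel (\<lambda>x. indicator {0<..<1} x * ww H1 H2 x * ((H2-H1) * s powr (H2-H1-1)))" using w_int[OF H] by simp
  have m: "(\<lambda>x. indicator {0<..<1} x * (ww H1 H2 x * ((H2-H1) * (s+(t-s)*x) powr (H2-H1-1) * x))) \<in> borel_measurable lborel"
    unfolding ww_def by measurable
  have b: "AE x in lborel. norm (indicator {0<..<1} x * (ww H1 H2 x * ((H2-H1) * (s+(t-s)*x) powr (H2-H1-1) * x)))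
     \<le> norm (indicator {0<..<1} x * ww H1 H2 x * ((H2-H1) * s powr (H2-H1-1)))"
  proof (rule AE_I2)
    fix x
    have "0 \<le> indicator {0<..<1} x * ww H1 H2 x * ((H2-H1) * s powr (H2-H1-1))"
      using H ww_nonneg[of H1 H2 x] by simp
    then show "norm (indicator {0<..<1} x * (ww H1 H2 x * ((H2-H1) * (s+(t-s)*x) powr (H2-H1-1) * x)))
     \<le> norm (indicator {0<..<1} x * ww H1 H2 x * ((H2-H1) * s powr (H2-H1-1)))"
      using Gd_pt(1,3)[OF H s, of x] by (simp only: real_norm_def abs_of_nonneg)
  qed
  show ?thesis by (rule Bochner_Integration.integrable_bound[OF i m b])
qed

lemma Gd_bounds:
  fixes H1 H2 s t x :: real
  assumes H: "1/2 < H1" "H1 < H2" "H2 < 1" and s: "0 < s" "s < t"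
  shows "0 \<le> Gd H1 H2 s t" "(t-s) powr (H2-H1) * Gd H1 H2 s t \<le> (H2-H1) * t powr (H2-H1) * (t-s) powr (H2-H1-1) * Wc H1 H2"
proof -
  show "0 \<le> Gd H1 H2 s t" unfolding Gd_def by (intro integral_nonneg_AE AE_I2 Gd_pt(1)[OF H s])
  have "(t-s) powr (H2-H1) * Gd H1 H2 s t = (\<integral>x. (t-s) powr (H2-H1) * (indicator {0<..<1} x * (ww H1 H2 x * ((H2-H1) * (s+(t-s)*x) powr (H2-H1-1) * x))) \<partial>lborel)"
    unfolding Gd_def by simp
  also have "\<dots> \<le> (\<integral>x. indicator {0<..<1} x * ww H1 H2 x * ((H2-H1) * t powr (H2-H1) * (t-s) powr (H2-H1-1)) \<partial>lborel)"
    using w_int[OF H] Gd_int[OF H s]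
    by (intro integral_mono Gd_pt(2)[OF H s]) simp_all
  also have "\<dots> = (H2-H1) * t powr (H2-H1) * (t-s) powr (H2-H1-1) * Wc H1 H2" by (simp add: Wc_def mult.commute)
  finally show "(t-s) powr (H2-H1) * Gd H1 H2 s t \<le> (H2-H1) * t powr (H2-H1) * (t-s) powr (H2-H1-1) * Wc H1 H2" .
qed

lemma betaH_nonneg:
  fixes H :: real
  assumes "1/2 < H" "H < 1"
  shows "0 \<le> betaH H"
proof -
  have "((\<lambda>t. t powr (H - 1/2 - 1) * (1 - t) powr (2 - 2*H - 1)) has_integral Beta (H - 1/2) (2 - 2*H)) {0..1}"
    using assms by (intro has_integral_Beta_real) auto
  then have "0 \<le> Beta (H - 1/2) (2 - 2*H)"
    by (rule has_integral_nonneg) auto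
  then show ?thesis unfolding betaH_def using assms by (intro real_sqrt_ge_zero divide_nonneg_nonneg) auto
qed

lemma dK_deriv:
  fixes H1 H2 s t0 :: real
  assumes H: "1/2 < H1" "H1 < H2" "H2 < 1" and s: "0 < s" "s < t0"
  shows "((\<lambda>t. KH H1 H2 t s) has_real_derivative
     betaH H2 * s powr (1/2-H2) * ((H2-H1) * (t0-s) powr (H2-H1-1) * Gf H1 H2 s t0 + (t0-s) powr (H2-H1) * Gd H1 H2 s t0)) (at t0)"
proof (rule has_field_derivative_transform_within_open[where S="{s<..}"])
  show "((\<lambda>t. betaH H2 * s powr (1/2-H2) * ((t-s) powr (H2-H1) * Gf H1 H2 s t)) has_real_derivative
     betaH H2 * s powr (1/2-H2) * ((H2-H1) * (t0-s) powr (H2-H1-1) * Gf H1 H2 s t0 + (t0-s) powr (H2-H1) * Gd H1 H2 s t0)) (at t0)"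
    using s G_deriv[OF H s]
    by (auto intro!: derivative_eq_intros simp: algebra_simps)
  show "\<And>x. x \<in> {s<..} \<Longrightarrow> betaH H2 * s powr (1/2-H2) * ((x-s) powr (H2-H1) * Gf H1 H2 s x) = KH H1 H2 x s"
    using K_formula s by simp
qed (use s in auto)



lemma subadd_powr:
  fixes a d :: real
  assumes a: "0 < a" "a < 1" and d: "0 < d"
  shows "(1+d) powr a \<le> 1 + d powr a"
proof -
  have e0: "(1+d) powr a = (1+d) * (1+d) powr (a-1)" using d by (simp add: powr_diff)
  have e: "(1+d) powr a = (1+d) powr (a-1) + d * (1+d) powr (a-1)"
    unfolding e0 by (simp add: ring_distribs)
  have le1: "(1+d) powr (a-1) \<le> 1"
    using powr_mono2'[of "a-1" 1 "1+d"] a d by simp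
  have le2: "(1+d) powr (a-1) \<le> d powr (a-1)"
    using powr_mono2'[of "a-1" d "1+d"] a d by simp
  have "d * (1+d) powr (a-1) \<le> d * d powr (a-1)" using le2 d by (intro mult_left_mono) auto
  also have "d * d powr (a-1) = d powr a" using d by (simp add: powr_diff)
  finally show ?thesis using e le1 by linarith
qed

lemma half_powr: "-1 \<le> e \<Longrightarrow> (1/2::real) powr e \<le> 2"
proof -
  assume "-1 \<le> e"
  then have "(1/2::real) powr e \<le> (1/2) powr (-1)" by (intro powr_mono') auto
  also have "(1/2::real) powr (-1) = 2" by (simp add: powr_minus_divide)
  finally show ?thesis .
qed

lemma Q_bound:
  fixes a d r :: real
  assumes a: "0 < a" "a < 1/2" and d: "0 < d" and r: "1/2 < r"
  shows "(r+d) powr (a-1) \<le> 2 * d powr (2*a-1)"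
proof (cases "d \<le> 1")
  case True
  have "(r+d) powr (a-1) \<le> (1/2) powr (a-1)" using powr_mono2'[of "a-1" "1/2" "r+d"] a d r by simp
  also have "\<dots> \<le> 2" using a by (intro half_powr) auto
  also have "1 \<le> d powr (2*a-1)" using powr_mono2'[of "2*a-1" d 1] True d a by simp
  then have "2 \<le> 2 * d powr (2*a-1)" by simp
  finally show ?thesis .
next
  case False
  have "(r+d) powr (a-1) \<le> d powr (a-1)" using powr_mono2'[of "a-1" d "r+d"] a d r by simp
  also have "\<dots> \<le> d powr (2*a-1)" using False a by (intro powr_mono) auto
  also have "\<dots> \<le> 2 * d powr (2*a-1)" by simp
  finally show ?thesis .
qed

lemma P_bound:
  fixes a d y H2 :: real
  assumes a: "0 < a" "a < 1/2" and d: "0 < d" and y: "0 < y" "y < 1" and H2: "1/2 < H2" "H2 < 1"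
  shows "y powr (1-2*H2) * (1-y) powr (a-1) * (1+d) powr a * (1+d-y) powr (a-1)
    \<le> 3 * d powr (2*a-1) * (y powr (1-2*H2) * (1-y) powr (a-1))
      + 2 * d powr (a-1) * (indicator {0..d} (1-y) * (1-y) powr (a-1))
      + 2 * (indicator {d..} (1-y) * (1-y) powr (2*a-2))"
proof -
  define r where "r = 1 - y"
  have r: "0 < r" "r < 1" using y by (auto simp: r_def)
  have ld: "1+d-y = r + d" by (simp add: r_def)
  define Y where "Y = y powr (1-2*H2)"
  define R where "R = r powr (a-1)"
  define Q where "Q = (r+d) powr (a-1)"
  have Y0: "0 \<le> Y" and R0: "0 \<le> R" and Q0: "0 \<le> Q" by (simp_all add: Y_def R_def Q_def)
  have Qd: "Q \<le> d powr (a-1)" unfolding Q_def using powr_mono2'[of "a-1" d "r+d"] a d r by simp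
  have A: "(1+d) powr a * Q \<le> Q + d powr (2*a-1)"
  proof -
    have "(1+d) powr a * Q \<le> (1 + d powr a) * Q" using subadd_powr[of a d] a d Q0 by (intro mult_right_mono) auto
    also have "\<dots> = Q + d powr a * Q" by (simp add: algebra_simps)
    also have "d powr a * Q \<le> d powr a * d powr (a-1)" using Qd by (intro mult_left_mono) auto
    also have "d powr a * d powr (a-1) = d powr (2*a-1)" by (simp add: powr_add[symmetric])
    finally show ?thesis by simp
  qed
  have C: "Y * R * Q \<le> 2 * d powr (2*a-1) * (Y * R) + 2 * d powr (a-1) * (indicator {0..d} r * R)
      + 2 * (indicator {d..} r * r powr (2*a-2))"
  proof (cases "y < 1/2")
    case True
    have "Q \<le> 2 * d powr (2*a-1)" unfolding Q_def using True by (intro Q_bound a d) (auto simp: r_def)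
    then have "Y * R * Q \<le> Y * R * (2 * d powr (2*a-1))" using Y0 R0 by (intro mult_left_mono) auto
    moreover have "0 \<le> 2 * d powr (a-1) * (indicator {0..d} r * R) + 2 * (indicator {d..} r * r powr (2*a-2))"
      using R0 by simp
    ultimately show ?thesis by (simp add: algebra_simps)
  next
    case False
    have "Y \<le> (1/2) powr (1-2*H2)" unfolding Y_def using powr_mono2'[of "1-2*H2" "1/2" y] False H2 by simp
    also have "\<dots> \<le> 2" using H2 by (intro half_powr) auto
    finally have Y2: "Y \<le> 2" .
    have RQ: "R * Q \<le> d powr (a-1) * (indicator {0..d} r * R) + indicator {d..} r * r powr (2*a-2)"
    proof (cases "r \<le> d")
      case True
      have "R * Q \<le> R * d powr (a-1)" using Qd R0 by (intro mult_left_mono) auto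
      moreover have "d powr (a-1) * (indicator {0..d} r * R) = R * d powr (a-1)" using True r by (simp add: indicator_def)
      moreover have "0 \<le> indicator {d..} r * r powr (2*a-2)" by simp
      ultimately show ?thesis by linarith
    next
      case False
      have "Q \<le> R" unfolding Q_def R_def using powr_mono2'[of "a-1" r "r+d"] a d r by simp
      then have "R * Q \<le> R * R" using R0 by (intro mult_left_mono) auto
      also have "R * R = r powr (2*a-2)" unfolding R_def by (simp add: powr_add[symmetric])
      finally show ?thesis using False r by (simp add: indicator_def)
    qed
    have "Y * R * Q = Y * (R * Q)" by simp
    also have "\<dots> \<le> 2 * (R * Q)" using Y2 R0 Q0 by (intro mult_right_mono) auto
    also have "\<dots> \<le> 2 * (d powr (a-1) * (indicator {0..d} r * R) + indicator {d..} r * r powr (2*a-2))"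
      using RQ by simp
    also have "\<dots> \<le> 2 * d powr (2*a-1) * (Y * R) + 2 * d powr (a-1) * (indicator {0..d} r * R)
      + 2 * (indicator {d..} r * r powr (2*a-2))"
      using Y0 R0 by (simp add: algebra_simps)
    finally show ?thesis .
  qed
  have "Y * R * (1+d) powr a * Q = Y * R * ((1+d) powr a * Q)" by simp
  also have "\<dots> \<le> Y * R * (Q + d powr (2*a-1))" using A Y0 R0 by (intro mult_left_mono) auto
  also have "\<dots> = Y * R * Q + d powr (2*a-1) * (Y * R)" by (simp add: algebra_simps)
  finally have "Y * R * (1+d) powr a * Q \<le> 3 * d powr (2*a-1) * (Y * R) + 2 * d powr (a-1) * (indicator {0..d} r * R)
      + 2 * (indicator {d..} r * r powr (2*a-2))" using C by simp
  then have F: "y powr (1-2*H2) * (1-y) powr (a-1) * (1+d) powr a * (1-y+d) powr (a-1)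
    \<le> 3 * d powr (2*a-1) * (y powr (1-2*H2) * (1-y) powr (a-1))
      + 2 * d powr (a-1) * (indicator {0..d} (1-y) * (1-y) powr (a-1))
      + 2 * (indicator {d..} (1-y) * (1-y) powr (2*a-2))" unfolding Y_def R_def Q_def r_def .
  have ld2: "1 + d - y = 1 - y + d" by simp
  show ?thesis unfolding ld2 by (rule F)
qed



lemma ennreal3: "0 \<le> x \<Longrightarrow> 0 \<le> y \<Longrightarrow> 0 \<le> z \<Longrightarrow> ennreal x + ennreal y + ennreal z = ennreal (x+y+z)"
  by (simp add: ennreal_plus)

lemma nn_reflect:
  fixes g :: "real \<Rightarrow> ennreal"
  assumes [measurable]: "g \<in> borel_measurable borel"
  shows "(\<integral>\<^sup>+y. g (1 - y) \<partial>lborel) = (\<integral>\<^sup>+r. g r \<partial>lborel)"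
  using nn_integral_real_affine[of g "-1" 1] by simp

lemma nn_powr0:
  fixes e d :: real
  assumes "-1 < e" "0 \<le> d"
  shows "(\<integral>\<^sup>+r. ennreal (indicator {0..d} r * r powr e) \<partial>lborel) = ennreal (d powr (e+1) / (e+1))"
proof -
  have "(\<integral>\<^sup>+r. ennreal (r powr e) * indicator {0..d} r \<partial>lborel) = ennreal (d powr (e+1) / (e+1))"
    using assms by (intro nn_integral_has_integral_lebesgue' has_integral_powr_from_0) auto
  moreover have "(\<lambda>r. ennreal (r powr e) * indicator {0..d} r) = (\<lambda>r. ennreal (indicator {0..d} r * r powr e))"
    by (auto simp: indicator_def)
  ultimately show ?thesis by simp
qed

lemma nn_powr_inf:
  fixes e d :: real
  assumes "e < -1" "0 < d"
  shows "(\<integral>\<^sup>+r. ennreal (indicator {d..} r * r powr e) \<partial>lborel) = ennreal (-(d powr (e+1)) / (e+1))"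
proof -
  have "(\<integral>\<^sup>+r. ennreal (r powr e) * indicator {d..} r \<partial>lborel) = ennreal (-(d powr (e+1)) / (e+1))"
    using assms by (intro nn_integral_has_integral_lebesgue' has_integral_powr_to_inf) auto
  moreover have "(\<lambda>r. ennreal (r powr e) * indicator {d..} r) = (\<lambda>r. ennreal (indicator {d..} r * r powr e))"
    by (auto simp: indicator_def)
  ultimately show ?thesis by simp
qed

lemma nn_beta:
  fixes p q :: real
  assumes "0 < p" "0 < q"
  shows "(\<integral>\<^sup>+y. ennreal (indicator {0<..<1} y * (y powr (p-1) * (1-y) powr (q-1))) \<partial>lborel) = ennreal (Beta p q)"
proof -
  have "((\<lambda>t. t powr (p - 1) * (1 - t) powr (q - 1)) has_integral Beta p q) {0<..<1}"
    using has_integral_Beta_real[of p q] assms by (simp add: has_integral_Icc_iff_Ioo)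
  then have "(\<integral>\<^sup>+y. ennreal (y powr (p-1) * (1-y) powr (q-1)) * indicator {0<..<1} y \<partial>lborel) = ennreal (Beta p q)"
    by (intro nn_integral_has_integral_lebesgue') auto
  moreover have "(\<lambda>y. ennreal (y powr (p-1) * (1-y) powr (q-1)) * indicator {0<..<1} y) = (\<lambda>y. ennreal (indicator {0<..<1} y * (y powr (p-1) * (1-y) powr (q-1))))"
    by (auto simp: indicator_def)
  ultimately show ?thesis by simp
qed

lemma N_bound:
  fixes a d H2 :: real
  assumes a: "0 < a" "a < 1/2" and d: "0 < d" and H2: "1/2 < H2" "H2 < 1"
  shows "(\<integral>\<^sup>+y. ennreal (indicator {0<..<1} y * (y powr (1-2*H2) * (1-y) powr (a-1) * (1+d) powr a * (1+d-y) powr (a-1))) \<partial>lborel)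
    \<le> ennreal ((3 * Beta (2-2*H2) a + 2/a + 2/(1-2*a)) * d powr (2*a-1))"
proof -
  define D1 where "D1 = d powr (2*a-1)"
  define D2 where "D2 = d powr (a-1)"
  have D1: "0 \<le> D1" and D2: "0 \<le> D2" by (simp_all add: D1_def D2_def)
  define b1 where "b1 y = indicator {0<..<1} y * (y powr (1-2*H2) * (1-y) powr (a-1))" for y :: real
  define g2 where "g2 r = indicator {0..d} r * r powr (a-1)" for r :: real
  define g3 where "g3 r = indicator {d..} r * r powr (2*a-2)" for r :: real
  have b1n: "0 \<le> b1 y" and g2n: "0 \<le> g2 y" and g3n: "0 \<le> g3 y" for y by (simp_all add: b1_def g2_def g3_def)
  have pt: "ennreal (indicator {0<..<1} y * (y powr (1-2*H2) * (1-y) powr (a-1) * (1+d) powr a * (1+d-y) powr (a-1)))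
     \<le> ennreal (3 * D1 * b1 y) + ennreal (2 * D2 * g2 (1-y)) + ennreal (2 * g3 (1-y))" for y
  proof -
    have "indicator {0<..<1} y * (y powr (1-2*H2) * (1-y) powr (a-1) * (1+d) powr a * (1+d-y) powr (a-1))
      \<le> 3 * D1 * b1 y + 2 * D2 * g2 (1-y) + 2 * g3 (1-y)"
    proof (cases "y \<in> {0<..<1}")
      case True
      then show ?thesis using P_bound[of a d y H2] a d H2
        by (simp add: D1_def D2_def b1_def g2_def g3_def)
    next
      case False
      then show ?thesis using b1n[of y] g2n[of "1-y"] g3n[of "1-y"] D1 D2 by simp
    qed
    then have "ennreal (indicator {0<..<1} y * (y powr (1-2*H2) * (1-y) powr (a-1) * (1+d) powr a * (1+d-y) powr (a-1)))
      \<le> ennreal (3 * D1 * b1 y + 2 * D2 * g2 (1-y) + 2 * g3 (1-y))" by (rule ennreal_leI)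
    also have "\<dots> = ennreal (3 * D1 * b1 y) + ennreal (2 * D2 * g2 (1-y)) + ennreal (2 * g3 (1-y))"
      using b1n[of y] g2n[of "1-y"] g3n[of "1-y"] D1 D2 by (simp add: ennreal_plus)
    finally show ?thesis .
  qed
  have m1: "(\<lambda>y. ennreal (3 * D1 * b1 y)) \<in> borel_measurable lborel" unfolding b1_def by measurable
  have m2: "(\<lambda>y. ennreal (2 * D2 * g2 (1-y))) \<in> borel_measurable lborel" unfolding g2_def by measurable
  have m3: "(\<lambda>y. ennreal (2 * g3 (1-y))) \<in> borel_measurable lborel" unfolding g3_def by measurable
  have "(\<integral>\<^sup>+y. ennreal (indicator {0<..<1} y * (y powr (1-2*H2) * (1-y) powr (a-1) * (1+d) powr a * (1+d-y) powr (a-1))) \<partial>lborel)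
     \<le> (\<integral>\<^sup>+y. ennreal (3 * D1 * b1 y) + ennreal (2 * D2 * g2 (1-y)) + ennreal (2 * g3 (1-y)) \<partial>lborel)"
    by (intro nn_integral_mono pt)
  also have "\<dots> = (\<integral>\<^sup>+y. ennreal (3 * D1 * b1 y) \<partial>lborel) + (\<integral>\<^sup>+y. ennreal (2 * D2 * g2 (1-y)) \<partial>lborel)
      + (\<integral>\<^sup>+y. ennreal (2 * g3 (1-y)) \<partial>lborel)"
    using m1 m2 m3 by (simp add: nn_integral_add)
  also have "(\<integral>\<^sup>+y. ennreal (3 * D1 * b1 y) \<partial>lborel) = ennreal (3 * D1) * (\<integral>\<^sup>+y. ennreal (b1 y) \<partial>lborel)"
    using D1 by (subst nn_integral_cmult[symmetric]) (auto simp: b1_def ennreal_mult)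
  also have "(\<integral>\<^sup>+y. ennreal (b1 y) \<partial>lborel) = ennreal (Beta (2-2*H2) a)"
    using nn_beta[of "2-2*H2" a] a H2 by (simp add: b1_def)
  also have "(\<integral>\<^sup>+y. ennreal (2 * D2 * g2 (1-y)) \<partial>lborel) = (\<integral>\<^sup>+r. ennreal (2 * D2 * g2 r) \<partial>lborel)"
    by (rule nn_reflect) (simp add: g2_def)
  also have "\<dots> = ennreal (2 * D2) * (\<integral>\<^sup>+r. ennreal (g2 r) \<partial>lborel)"
    using D2 by (subst nn_integral_cmult[symmetric]) (auto simp: g2_def ennreal_mult)
  also have "(\<integral>\<^sup>+r. ennreal (g2 r) \<partial>lborel) = ennreal (d powr a / a)"
    using nn_powr0[of "a-1" d] a d by (simp add: g2_def)
  also have "(\<integral>\<^sup>+y. ennreal (2 * g3 (1-y)) \<partial>lborel) = (\<integral>\<^sup>+r. ennreal (2 * g3 r) \<partial>lborel)"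
    by (rule nn_reflect) (simp add: g3_def)
  also have "\<dots> = ennreal 2 * (\<integral>\<^sup>+r. ennreal (g3 r) \<partial>lborel)"
    by (subst nn_integral_cmult[symmetric]) (auto simp: g3_def ennreal_mult)
  also have "(\<integral>\<^sup>+r. ennreal (g3 r) \<partial>lborel) = ennreal (-(d powr (2*a-1)) / (2*a-1))"
    using nn_powr_inf[of "2*a-2" d] a d by (simp add: g3_def)
  also have "ennreal (3 * D1) * ennreal (Beta (2-2*H2) a) + ennreal (2 * D2) * ennreal (d powr a / a)
      + ennreal 2 * ennreal (-(d powr (2*a-1)) / (2*a-1))
     = ennreal (3 * D1 * Beta (2-2*H2) a + 2 * D2 * (d powr a / a) + 2 * (-(d powr (2*a-1)) / (2*a-1)))"
  proof -
    have B: "0 \<le> Beta (2-2*H2) a"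
    proof -
      have "((\<lambda>t. t powr (2-2*H2 - 1) * (1 - t) powr (a - 1)) has_integral Beta (2-2*H2) a) {0..1}"
        using a H2 by (intro has_integral_Beta_real) auto
      then show ?thesis by (rule has_integral_nonneg) auto
    qed
    have c: "0 \<le> -(d powr (2*a-1)) / (2*a-1)" using a by (intro divide_nonpos_neg) auto
    define cc where "cc = -(d powr (2*a-1)) / (2*a-1)"
    have cc: "0 \<le> cc" using c by (simp add: cc_def)
    have da: "0 \<le> d powr a / a" using a by simp
    have e1: "ennreal (3 * D1) * ennreal (Beta (2-2*H2) a) = ennreal (3 * D1 * Beta (2-2*H2) a)"
      using D1 B by (simp add: ennreal_mult)
    have e2: "ennreal (2 * D2) * ennreal (d powr a / a) = ennreal (2 * D2 * (d powr a / a))"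
      using D2 da by (simp only: ennreal_mult)
    have e3: "ennreal 2 * ennreal cc = ennreal (2 * cc)"
      using cc by (simp add: ennreal_mult)
    have e4: "ennreal (3 * D1 * Beta (2-2*H2) a) + ennreal (2 * D2 * (d powr a / a)) + ennreal (2 * cc)
       = ennreal (3 * D1 * Beta (2-2*H2) a + 2 * D2 * (d powr a / a) + 2 * cc)"
      using D1 B D2 da cc by (intro ennreal3 mult_nonneg_nonneg) auto
    show ?thesis unfolding cc_def[symmetric] e1 e2 e3 e4 ..
  qed
  also have "3 * D1 * Beta (2-2*H2) a + 2 * D2 * (d powr a / a) + 2 * (-(d powr (2*a-1)) / (2*a-1))
      = (3 * Beta (2-2*H2) a + 2/a + 2/(1-2*a)) * d powr (2*a-1)"
  proof -
    have eq: "D2 * d powr a = D1" unfolding D1_def D2_def by (simp add: powr_add[symmetric])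
    have h: "2 * D2 * (d powr a / a) = 2 * D1 / a" unfolding eq[symmetric] by simp
    have a0: "a \<noteq> 0" "2*a-1 \<noteq> 0" "1-2*a \<noteq> 0" using a by auto
    show ?thesis unfolding h D1_def[symmetric] using a0
      by (simp add: field_simps)
  qed
  finally show ?thesis by simp
qed



lemma dK_props:
  fixes H1 H2 s t :: real
  assumes H: "1/2 < H1" "H1 < H2" "H2 < 1" and s: "0 < s" "s < t"
  shows "(\<lambda>t'. KH H1 H2 t' s) differentiable (at t)" "0 \<le> dKH H1 H2 t s"
    "dKH H1 H2 t s \<le> (2*(H2-H1)*betaH H2*Wc H1 H2) * s powr (1/2-H2) * t powr (H2-H1) * (t-s) powr (H2-H1-1)"
proof -
  define a where "a = H2 - H1"
  have a: "0 < a" using H by (simp add: a_def)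
  define G where "G = Gf H1 H2 s t"
  define Gd' where "Gd' = Gd H1 H2 s t"
  define W where "W = Wc H1 H2"
  define \<beta> where "\<beta> = betaH H2"
  define S where "S = s powr (1/2-H2)"
  have \<beta>: "0 \<le> \<beta>" unfolding \<beta>_def using H by (intro betaH_nonneg) auto
  have S: "0 \<le> S" by (simp add: S_def)
  have G: "0 \<le> G" "G \<le> t powr a * W" using Gf_bounds[OF H s] by (simp_all add: G_def W_def a_def)
  have Gd: "0 \<le> Gd'" "(t-s) powr a * Gd' \<le> a * t powr a * (t-s) powr (a-1) * W"
    using Gd_bounds[OF H s] by (simp_all add: Gd'_def W_def a_def)
  have der: "((\<lambda>t. KH H1 H2 t s) has_real_derivative \<beta> * S * (a * (t-s) powr (a-1) * G + (t-s) powr a * Gd')) (at t)"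
    using dK_deriv[OF H s] by (simp add: a_def \<beta>_def S_def G_def Gd'_def)
  then have dk: "dKH H1 H2 t s = \<beta> * S * (a * (t-s) powr (a-1) * G + (t-s) powr a * Gd')"
    unfolding dKH_def by (rule DERIV_imp_deriv)
  show "(\<lambda>t'. KH H1 H2 t' s) differentiable (at t)"
    using der by (intro differentiableI) (rule has_field_derivative_imp_has_derivative)
  have i0: "0 \<le> a * (t-s) powr (a-1) * G + (t-s) powr a * Gd'" using a G Gd by simp
  show "0 \<le> dKH H1 H2 t s" unfolding dk using \<beta> S i0 by simp
  have "a * (t-s) powr (a-1) * G \<le> a * (t-s) powr (a-1) * (t powr a * W)"
    using a G by (intro mult_left_mono) auto
  then have "a * (t-s) powr (a-1) * G + (t-s) powr a * Gd' \<le> 2 * a * W * t powr a * (t-s) powr (a-1)"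
    using Gd(2) by (simp add: algebra_simps)
  then have "\<beta> * S * (a * (t-s) powr (a-1) * G + (t-s) powr a * Gd') \<le> \<beta> * S * (2 * a * W * t powr a * (t-s) powr (a-1))"
    using \<beta> S by (intro mult_left_mono) auto
  then show "dKH H1 H2 t s \<le> (2*(H2-H1)*betaH H2*Wc H1 H2) * s powr (1/2-H2) * t powr (H2-H1) * (t-s) powr (H2-H1-1)"
    unfolding dk by (simp add: a_def \<beta>_def S_def W_def algebra_simps)
qed



lemma k_int:
  fixes H1 H2 s u :: real
  assumes "0 < s" "s < u"
  shows "kH H1 H2 s u = (\<integral>v. indicator {0<..<s} v * (dKH H1 H2 s v * dKH H1 H2 u v) \<partial>lborel)"
proof -
  have m: "min s u = s" using assms by simp
  have z: "(0::ereal) = ereal 0" by simp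
  show ?thesis unfolding kH_def m z using assms
    by (simp add: interval_lebesgue_integral_def set_lebesgue_integral_def einterval_eq_Icc)
qed

lemma k_bound:
  fixes H1 H2 s u C0 :: real
  assumes H: "1/2 < H1" "H1 < H2" "H2 < 1" and s: "0 < s" "s < u" and C0: "0 \<le> C0"
    and dKb: "\<And>t v. 0 < v \<Longrightarrow> v < t \<Longrightarrow> 0 \<le> dKH H1 H2 t v \<and>
        dKH H1 H2 t v \<le> C0 * v powr (1/2-H2) * t powr (H2-H1) * (t-v) powr (H2-H1-1)"
  shows "0 \<le> kH H1 H2 s u"
    "kH H1 H2 s u \<le> C0^2 * (3 * Beta (2-2*H2) (H2-H1) + 2/(H2-H1) + 2/(1-2*(H2-H1))) * s powr (1 - 2*H1) * (u - s) powr (2*H2 - 2*H1 - 1)"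
proof -
  define a where "a = H2 - H1"
  have a: "0 < a" "a < 1/2" using H by (auto simp: a_def)
  define K2 where "K2 = 3 * Beta (2-2*H2) a + 2/a + 2/(1-2*a)"
  define Bd where "Bd v = indicator {0<..<s} v * (C0^2 * (v powr (1-2*H2) * s powr a * u powr a * (s-v) powr (a-1) * (u-v) powr (a-1)))" for v
  define f where "f v = indicator {0<..<s} v * (dKH H1 H2 s v * dKH H1 H2 u v)" for v
  have pt: "0 \<le> f v \<and> f v \<le> Bd v" for v
  proof (cases "v \<in> {0<..<s}")
    case True
    have v: "0 < v" "v < s" "v < u" using True s by auto
    have k1: "0 \<le> dKH H1 H2 s v" "dKH H1 H2 s v \<le> C0 * v powr (1/2-H2) * s powr a * (s-v) powr (a-1)"
      using dKb[OF v(1,2)] by (simp_all add: a_def)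
    have k2: "0 \<le> dKH H1 H2 u v" "dKH H1 H2 u v \<le> C0 * v powr (1/2-H2) * u powr a * (u-v) powr (a-1)"
      using dKb[OF v(1,3)] by (simp_all add: a_def)
    have "dKH H1 H2 s v * dKH H1 H2 u v \<le> (C0 * v powr (1/2-H2) * s powr a * (s-v) powr (a-1)) * (C0 * v powr (1/2-H2) * u powr a * (u-v) powr (a-1))"
      using k1 k2 by (intro mult_mono) auto
    also have "\<dots> = C0^2 * ((v powr (1/2-H2) * v powr (1/2-H2)) * s powr a * u powr a * (s-v) powr (a-1) * (u-v) powr (a-1))"
      by (simp add: power2_eq_square algebra_simps)
    also have "v powr (1/2-H2) * v powr (1/2-H2) = v powr (1-2*H2)" by (simp add: powr_add[symmetric])
    finally show ?thesis using True k1 k2 by (simp add: f_def Bd_def)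
  next
    case False then show ?thesis by (simp add: f_def Bd_def)
  qed
  have ki: "kH H1 H2 s u = (\<integral>v. f v \<partial>lborel)" unfolding f_def by (rule k_int[OF s])
  show "0 \<le> kH H1 H2 s u" unfolding ki using pt by (intro integral_nonneg_AE AE_I2) auto
  define d where "d = (u - s) / s"
  have d: "0 < d" using s by (simp add: d_def)
  have ud: "u = s * (1 + d)" using s by (simp add: d_def field_simps)
  define Nf where "Nf y = indicator {0<..<1} y * (y powr (1-2*H2) * (1-y) powr (a-1) * (1+d) powr a * (1+d-y) powr (a-1))" for y
  define E where "E = 4*a - 1 - 2*H2"
  have Bd_m: "(\<lambda>v. ennreal (Bd v)) \<in> borel_measurable borel" unfolding Bd_def by measurable
  have scal: "Bd (s*y) = C0^2 * s powr E * Nf y" for y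
  proof (cases "y \<in> {0<..<1}")
    case True
    have y: "0 < y" "y < 1" using True by auto
    have ind: "indicator {0<..<s} (s*y) = (1::real)" using y s by (simp add: indicator_def)
    have f1: "(s*y) powr (1-2*H2) = s powr (1-2*H2) * y powr (1-2*H2)" using s y by (simp add: powr_mult)
    have f2: "u powr a = s powr a * (1+d) powr a" unfolding ud using s d by (simp add: powr_mult)
    have f3: "(s - s*y) powr (a-1) = s powr (a-1) * (1-y) powr (a-1)"
    proof -
      have "s - s*y = s * (1-y)" by (simp add: algebra_simps)
      then show ?thesis using s y by (simp add: powr_mult)
    qed
    have f4: "(u - s*y) powr (a-1) = s powr (a-1) * (1+d-y) powr (a-1)"
    proof -
      have "u - s*y = s * (1+d-y)" unfolding ud by (simp add: algebra_simps)
      then show ?thesis using s y d by (simp add: powr_mult)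
    qed
    have f5: "s powr (1-2*H2) * s powr a * s powr a * s powr (a-1) * s powr (a-1) = s powr E"
    proof -
      have "s powr (1-2*H2) * s powr a * s powr a * s powr (a-1) * s powr (a-1) = s powr ((1-2*H2) + a + a + (a-1) + (a-1))"
        by (simp add: powr_add[symmetric])
      also have "(1-2*H2) + a + a + (a-1) + (a-1) = E" by (simp add: E_def)
      finally show ?thesis .
    qed
    show ?thesis unfolding Bd_def Nf_def ind f1 f2 f3 f4 using True f5
      by (simp add: indicator_def)
  next
    case False
    have "s*y \<notin> {0<..<s}"
    proof
      assume "s*y \<in> {0<..<s}"
      then have "0 < s*y" "s*y < s*1" by auto
      then have "0 < y" "y < 1" using s by (auto simp: zero_less_mult_iff mult_less_cancel_left)
      then show False using False by auto
    qed
    then show ?thesis using False by (simp add: Bd_def Nf_def)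
  qed
  have Nf_m: "(\<lambda>y. ennreal (Nf y)) \<in> borel_measurable lborel" unfolding Nf_def by measurable
  have CE: "0 \<le> C0^2 * s powr E" by simp
  have Nb: "(\<integral>\<^sup>+y. ennreal (Nf y) \<partial>lborel) \<le> ennreal (K2 * d powr (2*a-1))"
    unfolding Nf_def K2_def using N_bound[of a d H2] a d H by simp
  have "(\<integral>\<^sup>+v. ennreal (f v) \<partial>lborel) \<le> (\<integral>\<^sup>+v. ennreal (Bd v) \<partial>lborel)"
    using pt by (intro nn_integral_mono ennreal_leI) auto
  also have "\<dots> = ennreal s * (\<integral>\<^sup>+y. ennreal (Bd (0 + s*y)) \<partial>lborel)"
    using nn_integral_real_affine[OF Bd_m, of s 0] s by simp
  also have "(\<integral>\<^sup>+y. ennreal (Bd (0 + s*y)) \<partial>lborel) = (\<integral>\<^sup>+y. ennreal (C0^2 * s powr E) * ennreal (Nf y) \<partial>lborel)"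
    using CE by (intro nn_integral_cong) (simp add: scal ennreal_mult' Nf_def)
  also have "\<dots> = ennreal (C0^2 * s powr E) * (\<integral>\<^sup>+y. ennreal (Nf y) \<partial>lborel)"
    using Nf_m by (rule nn_integral_cmult)
  also have "\<dots> \<le> ennreal (C0^2 * s powr E) * ennreal (K2 * d powr (2*a-1))"
    using Nb by (intro mult_left_mono) auto
  also have "ennreal s * (ennreal (C0^2 * s powr E) * ennreal (K2 * d powr (2*a-1))) \<le>
      ennreal (s * (C0^2 * s powr E) * (K2 * d powr (2*a-1)))"
    using s CE by (simp add: ennreal_mult' mult.assoc)
  finally have nn: "(\<integral>\<^sup>+v. ennreal (f v) \<partial>lborel) \<le> ennreal (s * (C0^2 * s powr E) * (K2 * d powr (2*a-1)))"
    by (simp add: mult_left_mono)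
  have B: "0 \<le> Beta (2-2*H2) a"
  proof -
    have "((\<lambda>t. t powr (2-2*H2 - 1) * (1 - t) powr (a - 1)) has_integral Beta (2-2*H2) a) {0..1}"
      using a H by (intro has_integral_Beta_real) auto
    then show ?thesis by (rule has_integral_nonneg) auto
  qed
  have K2: "0 \<le> K2" unfolding K2_def using a B by simp
  have "(\<integral>v. f v \<partial>lborel) \<le> s * (C0^2 * s powr E) * (K2 * d powr (2*a-1))"
    by (rule integral_real_bounded[OF _ nn]) (use s CE K2 in simp)
  also have "s * (C0^2 * s powr E) * (K2 * d powr (2*a-1)) = C0^2 * K2 * s powr (1 - 2*H1) * (u - s) powr (2*H2 - 2*H1 - 1)"
  proof -
    have dp: "d powr (2*a-1) = (u-s) powr (2*a-1) / s powr (2*a-1)" unfolding d_def by (simp add: powr_divide)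
    have sP: "s powr (1 - 2*H1) = s * s powr E / s powr (2*a-1)"
    proof -
      have "s * s powr E = s powr (1 + E)" using s by (simp add: powr_add)
      moreover have "s powr (1 + E) / s powr (2*a-1) = s powr (1 + E - (2*a-1))" by (rule powr_diff[symmetric])
      moreover have "1 + E - (2*a-1) = 1 - 2*H1" by (simp add: E_def a_def)
      ultimately show ?thesis by simp
    qed
    have ex: "2*H2 - 2*H1 - 1 = 2*a-1" by (simp add: a_def)
    show ?thesis unfolding ex sP dp by (simp add: field_simps)
  qed
  finally show "kH H1 H2 s u \<le> C0^2 * (3 * Beta (2-2*H2) (H2-H1) + 2/(H2-H1) + 2/(1-2*(H2-H1))) * s powr (1 - 2*H1) * (u - s) powr (2*H2 - 2*H1 - 1)"
    unfolding ki K2_def a_def .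
qed


theorem mainTheorem7:
  fixes H1 H2 :: real
  assumes "1/2 < H1" and "H1 < H2" and "H2 < 1"
  shows "\<exists>C>0.
    (\<forall>s u. 0 < s \<and> s < u \<longrightarrow>
       0 \<le> kH H1 H2 s u \<and> kH H1 H2 s u = kH H1 H2 u s \<and>
       kH H1 H2 s u \<le> C * s powr (1 - 2*H1) * (u - s) powr (2*H2 - 2*H1 - 1)) \<and>
    (\<forall>s t. 0 < s \<and> s < t \<longrightarrow>
       (\<lambda>t'. KH H1 H2 t' s) differentiable (at t) \<and>
       0 \<le> dKH H1 H2 t s \<and>
       dKH H1 H2 t s \<le> C * s powr (1/2 - H2) * t powr (H2 - H1) * (t - s) powr (H2 - H1 - 1))"
proof -
  note H = assms
  define C0 where "C0 = 2*(H2-H1)*betaH H2*Wc H1 H2"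
  define C1 where "C1 = C0^2 * (3 * Beta (2-2*H2) (H2-H1) + 2/(H2-H1) + 2/(1-2*(H2-H1)))"
  define C where "C = max 1 (max C0 C1)"
  have W: "0 \<le> Wc H1 H2" unfolding Wc_def by (intro integral_nonneg_AE AE_I2) (simp add: ww_def)
  have C0: "0 \<le> C0" unfolding C0_def using H W betaH_nonneg[of H2] by simp
  have CC0: "C0 \<le> C" and CC1: "C1 \<le> C" and Cpos: "0 < C" by (auto simp: C_def)
  have dKb: "0 \<le> dKH H1 H2 t v \<and> dKH H1 H2 t v \<le> C0 * v powr (1/2-H2) * t powr (H2-H1) * (t-v) powr (H2-H1-1)"
    if "0 < v" "v < t" for t v
    using dK_props[OF H that] unfolding C0_def by simp
  show ?thesis
  proof (intro exI[of _ C] conjI allI impI)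
    show "0 < C" by (rule Cpos)
  next
    fix s u :: real assume su: "0 < s \<and> s < u"
    note kb = k_bound[OF H su[THEN conjunct1] su[THEN conjunct2] C0 dKb]
    show "0 \<le> kH H1 H2 s u" using kb(1) .
    show "kH H1 H2 s u = kH H1 H2 u s" unfolding kH_def by (simp add: min.commute mult.commute)
    have "kH H1 H2 s u \<le> C1 * s powr (1 - 2*H1) * (u - s) powr (2*H2 - 2*H1 - 1)"
      using kb(2) unfolding C1_def .
    also have "\<dots> \<le> C * s powr (1 - 2*H1) * (u - s) powr (2*H2 - 2*H1 - 1)"
      using CC1 by (intro mult_right_mono) auto
    finally show "kH H1 H2 s u \<le> C * s powr (1 - 2*H1) * (u - s) powr (2*H2 - 2*H1 - 1)" .
  next
    fix s t :: real assume st: "0 < s \<and> s < t"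
    note dp = dK_props[OF H st[THEN conjunct1] st[THEN conjunct2]]
    show "(\<lambda>t'. KH H1 H2 t' s) differentiable (at t)" by (rule dp(1))
    show "0 \<le> dKH H1 H2 t s" by (rule dp(2))
    have "dKH H1 H2 t s \<le> C0 * s powr (1/2-H2) * t powr (H2-H1) * (t-s) powr (H2-H1-1)"
      using dp(3) unfolding C0_def .
    also have "\<dots> \<le> C * s powr (1/2-H2) * t powr (H2-H1) * (t-s) powr (H2-H1-1)"
      using CC0 by (intro mult_right_mono) auto
    finally show "dKH H1 H2 t s \<le> C * s powr (1/2 - H2) * t powr (H2 - H1) * (t - s) powr (H2 - H1 - 1)" .
  qed
qed

end
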